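(* Let $U$ be a countably infinite universe, $\mathcal{C}=(L_1,L_2,\ldots)$ a countably infinite collection of languages over $U$, let $m^\star(L_i)$ and the orderings $\mathcal{C}'_i$ be as computed by the Procedure described in the context, and fix a non-decreasing $f:\mathbb{N}\to\mathbb{N}$ with $\lim_{t\to\infty}f(t)=\infty$. Then the Algorithm described in the context (with this $f$) non-uniformly generates from $\mathcal{C}$ with generation time $t^\star(L_i)=\max(g(i),m^\star(L_i)+1)$ for every $i$, where $g(i)$ is the smallest $j$ with $f(j)\ge i$; that is, for every $i$, every enumeration of $L_i$, and every $t$ with $|S_t|\ge t^\star(L_i)$, the output $z_t$ belongs to $L_i\setminus S_t$.
   Context: A language is an infinite subset of $U$. A collection is a sequence of languages; repetitions are allowed and entries are distinguished by their index. An enumeration of a language $L$ is a sequence $x_1,x_2,\ldots$ with every $x_t\in L$ and every $x\in L$ equal to some $x_t$. A generating algorithm at each time $t\ge1$ receives $x_1,\ldots,x_t$ and outputs $z_t\in U$; $S_t$ is the set of distinct strings among $x_1,\ldots,x_t$. An algorithm non-uniformly generates from $\mathcal{C}$ with generation times $t(L_i)$ if for every $i$ and every enumeration of $L_i$, $z_t\in L_i\setminus S_t$ whenever $|S_t|\ge t(L_i)$. Procedure. Set $\mathcal{C}'_0=()$. For $i=1,2,3,\ldots$: append the entry $L_i$ at the end of $\mathcal{C}'_{i-1}$ to get $\mathcal{C}'_i=(L'_1,\ldots,L'_i)$ (a permutation of the entries $L_1,\ldots,L_i$), and set $j=i$. Repeat: (1) among all subcollections $\mathcal{D}$ of the entries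 $(L'_1,\ldots,L'_j)$ that include the entry $L'_j$ and satisfy $|\bigcap_{L\in\mathcal{D}}L|<\infty$, let $\mathcal{C}_{\mathrm{chk}}$ be one maximizing $|\bigcap_{L\in\mathcal{D}}L|$ and $m_{\mathrm{chk}}$ this maximum; if no such $\mathcal{D}$ exists, set $\mathcal{C}_{\mathrm{chk}}=()$, $m_{\mathrm{chk}}=0$. (2) If $j\le1$ or $m_{\mathrm{chk}}>m^\star(L'_{j-1})$ (the entry $L'_{j-1}$ has original index $<i$, so its value $m^\star$ is already fixed), stop the loop. (3) Otherwise swap the entries at positions $j-1$ and $j$ in $\mathcal{C}'_i$, set $j\leftarrow j-1$ and return to (1). When the loop stops, set $\mathcal{C}(L_i)=\mathcal{C}_{\mathrm{chk}}$ and $m^\star(L_i)=m_{\mathrm{chk}}$ (these are attached to index $i$). Algorithm (with parameter $f$). At time $t$, run the first $f(t)$ iterations of the Procedure to obtain $\mathcal{C}'_{f(t)}=(L'_1,\ldots,L'_{f(t)})$. Initialize $I_t=()$ and for $j=1,\ldots,f(t)$ in order: if $S_t\subseteq L'_j$ and $|\bigcap_{L\in I_t\cup\{L'_j\}}L|=\infty$, append $L'_j$ to $I_t$. If $I_t$ is empty, output an arbitrary string of $U\setminus S_t$; otherwise output a string of $(\bigcap_{L\in I_t}L)\setminus S_t$. *)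

theory Defs
  imports Main "HOL-Library.Countable_Set"
begin

text \<open>A collection is L :: nat => 'a set, entries L 1, L 2, ... (index 0 unused).
  An ordering C'_i is represented as a list of original indices (position p, 1-based,
  holds the original index ord ! (p-1)).\<close>

definition inter_pos :: "(nat \<Rightarrow> 'a set) \<Rightarrow> nat list \<Rightarrow> nat set \<Rightarrow> 'a set" where
  "inter_pos L ord P = (\<Inter>k\<in>P. L (ord ! k))"

definition chk_sizes :: "(nat \<Rightarrow> 'a set) \<Rightarrow> nat list \<Rightarrow> nat \<Rightarrow> nat set" where
  "chk_sizes L ord j =
     {card (inter_pos L ord P) | P. P \<subseteq> {..<j} \<and> j - 1 \<in> P \<and> finite (inter_pos L ord P)}"

definition mchk :: "(nat \<Rightarrow> 'a set) \<Rightarrow> nat list \<Rightarrow> nat \<Rightarrow> nat" where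
  "mchk L ord j = (if chk_sizes L ord j = {} then 0 else Max (chk_sizes L ord j))"

text \<open>The loop (1)-(3): the new entry sits at position j (1-based). Returns the final
  ordering and m_chk at the stop.\<close>
function bubble :: "(nat \<Rightarrow> 'a set) \<Rightarrow> (nat \<Rightarrow> nat) \<Rightarrow> nat list \<Rightarrow> nat \<Rightarrow> nat list \<times> nat" where
  "bubble L ms ord j =
     (if j \<le> 1 \<or> mchk L ord j > ms (ord ! (j - 2)) then (ord, mchk L ord j)
      else bubble L ms (ord[j - 2 := ord ! (j - 1), j - 1 := ord ! (j - 2)]) (j - 1))"
  by pat_completeness auto
termination by (relation "measure (\<lambda>(L, ms, ord, j). j)") auto

text \<open>The first i iterations of the Procedure: ordering C'_i and the values m* (by
  original index).\<close>
fun proc :: "(nat \<Rightarrow> 'a set) \<Rightarrow> nat \<Rightarrow> nat list \<times> (nat \<Rightarrow> nat)" where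
  "proc L 0 = ([], (\<lambda>_. 0))"
| "proc L (Suc i) =
     (let (ord, ms) = proc L i;
          (ord', m) = bubble L ms (ord @ [Suc i]) (Suc i)
      in (ord', ms(Suc i := m)))"

definition order :: "(nat \<Rightarrow> 'a set) \<Rightarrow> nat \<Rightarrow> nat list" where
  "order L i = fst (proc L i)"

definition mstar :: "(nat \<Rightarrow> 'a set) \<Rightarrow> nat \<Rightarrow> nat" where
  "mstar L i = snd (proc L i) i"

fun build_I :: "(nat \<Rightarrow> 'a set) \<Rightarrow> 'a set \<Rightarrow> nat list \<Rightarrow> nat list \<Rightarrow> nat list" where
  "build_I L S [] I = I"
| "build_I L S (k # ks) I =
     build_I L S ks
       (if S \<subseteq> L k \<and> infinite (\<Inter>k'\<in>set (I @ [k]). L k') then I @ [k] else I)"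

text \<open>z is an admissible output of the Algorithm (parameter f) at time t, when the
  set of distinct strings seen so far is S.\<close>
definition alg_output :: "(nat \<Rightarrow> 'a set) \<Rightarrow> (nat \<Rightarrow> nat) \<Rightarrow> nat \<Rightarrow> 'a set \<Rightarrow> 'a \<Rightarrow> bool" where
  "alg_output L f t S z =
     (let I = build_I L S (order L (f t)) []
      in if I = [] then z \<notin> S else z \<in> (\<Inter>k\<in>set I. L k) - S)"

definition enumeration :: "'a set \<Rightarrow> (nat \<Rightarrow> 'a) \<Rightarrow> bool" where
  "enumeration A x = ((\<forall>t\<ge>1. x t \<in> A) \<and> (\<forall>a\<in>A. \<exists>t\<ge>1. x t = a))"

definition gtime :: "(nat \<Rightarrow> nat) \<Rightarrow> nat \<Rightarrow> nat" where
  "gtime f i = (LEAST j. j \<ge> 1 \<and> f j \<ge> i)"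

end

theory Submission
  imports Defs
begin

declare bubble.simps[simp del]

definition preS :: "nat list \<Rightarrow> nat \<Rightarrow> nat set" where
  "preS ord c = set (takeWhile (\<lambda>x. x \<noteq> c) ord)"

definition InvAt :: "(nat \<Rightarrow> 'a set) \<Rightarrow> nat list \<Rightarrow> (nat \<Rightarrow> nat) \<Rightarrow> nat \<Rightarrow> bool" where
  "InvAt L ord ms c = (\<forall>K. K \<subseteq> insert c (preS ord c) \<longrightarrow> c \<in> K \<longrightarrow>
      finite (\<Inter>k\<in>K. L k) \<longrightarrow> card (\<Inter>k\<in>K. L k) \<le> ms c)"

lemma InvAt_upd: "c \<noteq> new \<Longrightarrow> InvAt L ord (ms(new := m)) c = InvAt L ord ms c"
  by (simp add: InvAt_def)

lemma preS_mid: "c \<notin> set us \<Longrightarrow> preS (us @ c # vs) c = set us"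
  unfolding preS_def by (subst takeWhile_append2) auto

lemma preS_snoc: "c \<in> set ord \<Longrightarrow> preS (ord @ [x]) c = preS ord c"
  unfolding preS_def by (simp add: takeWhile_append1)

lemma preS_swap: "c \<noteq> a \<Longrightarrow> c \<noteq> b \<Longrightarrow> preS (xs @ a # b # ys) c = preS (xs @ b # a # ys) c"
proof (cases "c \<in> set xs")
  case True
  have "\<And>ys'. takeWhile (\<lambda>x. x \<noteq> c) (xs @ ys') = takeWhile (\<lambda>x. x \<noteq> c) xs"
    by (rule takeWhile_append1[OF True]) simp
  then show ?thesis unfolding preS_def by simp
next
  case False
  assume "c \<noteq> a" "c \<noteq> b"
  have h: "\<And>x. x \<in> set xs \<Longrightarrow> x \<noteq> c" using False by auto
  have "takeWhile (\<lambda>x. x \<noteq> c) (xs @ a # b # ys) = xs @ takeWhile (\<lambda>x. x \<noteq> c) (a # b # ys)"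
    by (rule takeWhile_append2) (rule h)
  moreover have "takeWhile (\<lambda>x. x \<noteq> c) (xs @ b # a # ys) = xs @ takeWhile (\<lambda>x. x \<noteq> c) (b # a # ys)"
    by (rule takeWhile_append2) (rule h)
  ultimately show ?thesis unfolding preS_def using \<open>c \<noteq> a\<close> \<open>c \<noteq> b\<close> by auto
qed

lemma chk_finite: "finite (chk_sizes L ord j)"
proof -
  have "chk_sizes L ord j \<subseteq> (\<lambda>P. card (inter_pos L ord P)) ` Pow {..<j}"
    unfolding chk_sizes_def by auto
  then show ?thesis by (rule finite_subset) simp
qed

lemma mchk_ge:
  assumes "ord = us @ c # vs" "K \<subseteq> insert c (set us)" "c \<in> K" "finite (\<Inter>k\<in>K. L k)"
  shows "card (\<Inter>k\<in>K. L k) \<le> mchk L ord (Suc (length us))"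
proof -
  define P where "P = {p. p < Suc (length us) \<and> ord ! p \<in> K}"
  have img: "(!) ord ` P = K"
  proof
    show "(!) ord ` P \<subseteq> K" unfolding P_def by auto
    show "K \<subseteq> (!) ord ` P"
    proof
      fix k assume k: "k \<in> K"
      show "k \<in> (!) ord ` P"
      proof (cases "k = c")
        case True
        then have "ord ! length us = k" using assms(1) by simp
        then show ?thesis unfolding P_def using k by (auto intro!: image_eqI[where x="length us"])
      next
        case False
        then have "k \<in> set us" using k assms(2) by auto
        then obtain p where p: "p < length us" "us ! p = k" by (auto simp: in_set_conv_nth)
        then have "ord ! p = k" using assms(1) by (simp add: nth_append)
        then show ?thesis unfolding P_def using k p by (auto intro!: image_eqI[where x=p])
      qed
    qed
  qed
  have ip: "inter_pos L ord P = (\<Inter>k\<in>K. L k)"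
    unfolding inter_pos_def using img by auto
  have "length us \<in> P" unfolding P_def using assms by simp
  then have "card (\<Inter>k\<in>K. L k) \<in> chk_sizes L ord (Suc (length us))"
    unfolding chk_sizes_def using ip assms(4)
    by (intro CollectI exI[where x=P]) (auto simp: P_def)
  then show ?thesis unfolding mchk_def using chk_finite
    by (auto intro: Max_ge)
qed

lemma bubble_stop_new:
  assumes "distinct (pre @ new # post)"
  shows "InvAt L (pre @ new # post) (ms(new := mchk L (pre @ new # post) (Suc (length pre)))) new"
  unfolding InvAt_def
proof (intro allI impI)
  fix K assume K: "K \<subseteq> insert new (preS (pre @ new # post) new)" "new \<in> K"
    "finite (\<Inter>k\<in>K. L k)"
  have "preS (pre @ new # post) new = set pre" using assms by (simp add: preS_mid)
  then show "card (\<Inter>k\<in>K. L k) \<le> (ms(new := mchk L (pre @ new # post) (Suc (length pre)))) new"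
    using mchk_ge[of "pre @ new # post" pre new post K L] K by simp
qed

lemma bubble_inv:
  assumes "distinct (pre @ new # post)"
    and "\<forall>c\<in>set (pre @ post). InvAt L (pre @ new # post) ms c"
    and "bubble L ms (pre @ new # post) (Suc (length pre)) = (ord', m)"
  shows "distinct ord' \<and> set ord' = set (pre @ new # post) \<and>
         (\<forall>c\<in>set ord'. InvAt L ord' (ms(new := m)) c)"
  using assms
proof (induction pre arbitrary: post rule: rev_induct)
  case Nil
  have "bubble L ms ([] @ new # post) (Suc (length ([]::nat list))) = (new # post, mchk L (new # post) 1)"
    by (subst bubble.simps) (simp del: bubble.simps)
  then have eq: "ord' = new # post" "m = mchk L (new # post) 1" using Nil.prems(3) by auto
  show ?case
  proof (intro conjI ballI)
    show "distinct ord'" "set ord' = set ([] @ new # post)" using eq Nil.prems by auto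
    fix c assume c: "c \<in> set ord'"
    show "InvAt L ord' (ms(new := m)) c"
    proof (cases "c = new")
      case True
      then show ?thesis using bubble_stop_new[of "[]" new post L ms] Nil.prems eq by simp
    next
      case False
      then show ?thesis using Nil.prems c eq by (simp add: InvAt_upd)
    qed
  qed
next
  case (snoc b pre')
  let ?ord = "(pre' @ [b]) @ new # post"
  let ?j = "Suc (length (pre' @ [b]))"
  have bn: "b \<noteq> new" using snoc.prems(1) by auto
  show ?case
  proof (cases "mchk L ?ord ?j > ms b")
    case True
    have "bubble L ms ?ord ?j = (?ord, mchk L ?ord ?j)"
    proof (rule trans[OF bubble.simps])
      have T: "\<not> (?j \<le> 1) \<and> mchk L ?ord ?j > ms (?ord ! (?j - 2))" using True by (simp add: nth_append)
      show "(if ?j \<le> 1 \<or> mchk L ?ord ?j > ms (?ord ! (?j - 2)) then (?ord, mchk L ?ord ?j)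
        else bubble L ms (?ord[?j - 2 := ?ord ! (?j - 1), ?j - 1 := ?ord ! (?j - 2)]) (?j - 1)) =
        (?ord, mchk L ?ord ?j)" using T by (simp only: if_True disj_not1 simp_thms)
    qed
    then have eq: "ord' = ?ord" "m = mchk L ?ord ?j" using snoc.prems(3) by auto
    show ?thesis
    proof (intro conjI ballI)
      show "distinct ord'" "set ord' = set ?ord" using eq snoc.prems by auto
      fix c assume c: "c \<in> set ord'"
      show "InvAt L ord' (ms(new := m)) c"
      proof (cases "c = new")
        case True
        then show ?thesis using bubble_stop_new[of "pre' @ [b]" new post L ms] snoc.prems eq by simp
      next
        case False
        then show ?thesis using snoc.prems c eq by (auto simp add: InvAt_upd)
      qed
    qed
  next
    case False
    let ?ord2 = "pre' @ new # b # post"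
    have upd: "?ord[?j - 2 := ?ord ! (?j - 1), ?j - 1 := ?ord ! (?j - 2)] = ?ord2"
      by (simp add: list_update_append nth_append)
    have T: "\<not> (?j \<le> 1 \<or> mchk L ?ord ?j > ms (?ord ! (?j - 2)))" using False by (simp add: nth_append)
    have j1: "?j - 1 = Suc (length pre')" by simp
    have "bubble L ms ?ord ?j = bubble L ms (?ord[?j - 2 := ?ord ! (?j - 1), ?j - 1 := ?ord ! (?j - 2)]) (?j - 1)"
      by (rule trans[OF bubble.simps]) (simp only: T if_False)
    also have "\<dots> = bubble L ms ?ord2 (Suc (length pre'))" by (subst upd) (simp only: j1)
    finally have eqb: "bubble L ms ?ord ?j = bubble L ms ?ord2 (Suc (length pre'))" .
    have rec: "bubble L ms ?ord2 (Suc (length pre')) = (ord', m)" using snoc.prems(3) eqb by simp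
    have d2: "distinct ?ord2" using snoc.prems(1) by auto
    have inv2: "\<forall>c\<in>set (pre' @ b # post). InvAt L ?ord2 ms c"
    proof
      fix c assume c: "c \<in> set (pre' @ b # post)"
      show "InvAt L ?ord2 ms c"
      proof (cases "c = b")
        case False
        have cn: "c \<noteq> new" using c snoc.prems(1) by auto
        have "preS ?ord2 c = preS ?ord c"
          using preS_swap[of c b new pre' post] False cn by simp
        moreover have "InvAt L ?ord ms c" using snoc.prems(2) c False by auto
        ultimately show ?thesis unfolding InvAt_def by simp
      next
        case True
        have hb: "InvAt L ?ord ms b" using snoc.prems(2) by auto
        have pb: "preS ?ord b = set pre'" using snoc.prems(1) preS_mid[of b pre' "new # post"] by simp
        have pb2: "preS ?ord2 b = insert new (set pre')"
          using snoc.prems(1) preS_mid[of b "pre' @ [new]" post] by simp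
        show ?thesis unfolding InvAt_def True
        proof (intro allI impI)
          fix K assume K: "K \<subseteq> insert b (preS ?ord2 b)" "b \<in> K" "finite (\<Inter>k\<in>K. L k)"
          show "card (\<Inter>k\<in>K. L k) \<le> ms b"
          proof (cases "new \<in> K")
            case True
            have "K \<subseteq> insert new (set (pre' @ [b]))" using K pb2 by auto
            then have "card (\<Inter>k\<in>K. L k) \<le> mchk L ?ord ?j"
              using mchk_ge[of ?ord "pre' @ [b]" new post K L] True K by simp
            then show ?thesis using False by simp
          next
            case False
            then have "K \<subseteq> insert b (preS ?ord b)" using K pb pb2 by auto
            then show ?thesis using hb K unfolding InvAt_def by blast
          qed
        qed
      qed
    qed
    have R: "distinct ord' \<and> set ord' = set ?ord2 \<and> (\<forall>c\<in>set ord'. InvAt L ord' (ms(new := m)) c)"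
      by (rule snoc.IH[OF d2 inv2 rec])
    have S2: "set ?ord2 = set ?ord" by auto
    show ?thesis
    proof (intro conjI)
      show "distinct ord'" using R by (rule conjunct1)
      show "set ord' = set ?ord" using conjunct1[OF conjunct2[OF R]] S2 by (rule trans)
      show "\<forall>c\<in>set ord'. InvAt L ord' (ms(new := m)) c" using R by (elim conjE)
    qed
  qed
qed

lemma proc_inv:
  "distinct (fst (proc L n)) \<and> set (fst (proc L n)) = {1..n} \<and>
   (\<forall>c\<in>set (fst (proc L n)). InvAt L (fst (proc L n)) (snd (proc L n)) c) \<and>
   (\<forall>c. 1 \<le> c \<and> c \<le> n \<longrightarrow> snd (proc L n) c = mstar L c)"
proof (induction n)
  case 0
  then show ?case by simp
next
  case (Suc n)
  obtain ord ms where pn: "proc L n = (ord, ms)" by (cases "proc L n")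
  obtain ord' m where bb: "bubble L ms (ord @ [Suc n]) (Suc n) = (ord', m)"
    by (cases "bubble L ms (ord @ [Suc n]) (Suc n)")
  have ps: "proc L (Suc n) = (ord', ms(Suc n := m))" using pn bb by simp
  have d: "distinct ord" "set ord = {1..n}" using Suc.IH pn by auto
  have "card (set ord) = length ord" by (rule distinct_card[OF d(1)])
  then have len: "length ord = n" using d(2) by simp
  have d1: "distinct (ord @ Suc n # [])" using d by auto
  have inv1: "\<forall>c\<in>set (ord @ []). InvAt L (ord @ Suc n # []) ms c"
  proof
    fix c assume c: "c \<in> set (ord @ [])"
    then have "InvAt L ord ms c" using Suc.IH pn by auto
    then show "InvAt L (ord @ Suc n # []) ms c" using c preS_snoc[of c ord "Suc n"]
      unfolding InvAt_def by simp
  qed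
  have bb': "bubble L ms (ord @ Suc n # []) (Suc (length ord)) = (ord', m)" using bb len by simp
  have r: "distinct ord' \<and> set ord' = set (ord @ Suc n # []) \<and>
         (\<forall>c\<in>set ord'. InvAt L ord' (ms(Suc n := m)) c)"
    by (rule bubble_inv[OF d1 inv1 bb'])
  have ms: "\<forall>c. 1 \<le> c \<and> c \<le> Suc n \<longrightarrow> (ms(Suc n := m)) c = mstar L c"
  proof (intro allI impI)
    fix c assume c: "1 \<le> c \<and> c \<le> Suc n"
    show "(ms(Suc n := m)) c = mstar L c"
    proof (cases "c = Suc n")
      case True
      then show ?thesis using ps unfolding mstar_def by simp
    next
      case False
      then show ?thesis using Suc.IH pn c by auto
    qed
  qed
  have A: "set ord' = {1..Suc n}" using r d by auto
  have f1: "fst (proc L (Suc n)) = ord'" "snd (proc L (Suc n)) = ms(Suc n := m)" using ps by auto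
  show ?case unfolding f1
  proof (intro conjI)
    show "distinct ord'" by (rule conjunct1[OF r])
    show "set ord' = {1..Suc n}" by (rule A)
    show "\<forall>c\<in>set ord'. InvAt L ord' (ms(Suc n := m)) c" by (rule conjunct2[OF conjunct2[OF r]])
    show "\<forall>c. 1 \<le> c \<and> c \<le> Suc n \<longrightarrow> (ms(Suc n := m)) c = mstar L c" by (rule ms)
  qed
qed

lemma build_I_append: "build_I L S (xs @ ys) I = build_I L S ys (build_I L S xs I)"
  by (induction xs arbitrary: I) simp_all

lemma if_set1: "set I \<subseteq> set (if P then I @ [k] else I)" by (cases P) auto
lemma if_set2: "set (if P then I @ [k] else I) \<subseteq> insert k (set I)" by (cases P) auto
lemma if_set3: "\<forall>k\<in>set I. Q k \<Longrightarrow> (P \<Longrightarrow> Q k) \<Longrightarrow> \<forall>k'\<in>set (if P then I @ [k] else I). Q k'"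
  by (cases P) auto

lemma build_I_mono: "set I \<subseteq> set (build_I L S ks I)"
proof (induction ks arbitrary: I)
  case Nil then show ?case by simp
next
  case (Cons k ks)
  define J where "J = (if S \<subseteq> L k \<and> infinite (\<Inter>k'\<in>set (I @ [k]). L k') then I @ [k] else I)"
  have e: "build_I L S (k # ks) I = build_I L S ks J" unfolding J_def by (simp only: build_I.simps)
  have "set I \<subseteq> set J" unfolding J_def by (rule if_set1)
  also have "\<dots> \<subseteq> set (build_I L S ks J)" by (rule Cons.IH)
  finally show ?case unfolding e .
qed

lemma build_I_sub:
  "\<forall>k\<in>set I. S \<subseteq> L k \<Longrightarrow> \<forall>k\<in>set (build_I L S ks I). S \<subseteq> L k"
proof (induction ks arbitrary: I)
  case Nil then show ?case by simp
next
  case (Cons k ks)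
  have "\<forall>k'\<in>set (if S \<subseteq> L k \<and> infinite (\<Inter>k'\<in>set (I @ [k]). L k') then I @ [k] else I). S \<subseteq> L k'"
    using Cons.prems by (rule if_set3) simp
  then have "\<forall>k\<in>set (build_I L S ks (if S \<subseteq> L k \<and> infinite (\<Inter>k'\<in>set (I @ [k]). L k') then I @ [k] else I)). S \<subseteq> L k"
    by (rule Cons.IH)
  then show ?case by (simp only: build_I.simps)
qed

lemma build_I_set: "set (build_I L S ks I) \<subseteq> set I \<union> set ks"
proof (induction ks arbitrary: I)
  case Nil then show ?case by simp
next
  case (Cons k ks)
  define J where "J = (if S \<subseteq> L k \<and> infinite (\<Inter>k'\<in>set (I @ [k]). L k') then I @ [k] else I)"
  have e: "build_I L S (k # ks) I = build_I L S ks J" unfolding J_def by (simp only: build_I.simps)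
  have "set J \<subseteq> insert k (set I)" unfolding J_def by (rule if_set2)
  moreover have "set (build_I L S ks J) \<subseteq> set J \<union> set ks" by (rule Cons.IH)
  ultimately show ?case unfolding e by auto
qed

theorem mainTheorem2:
  fixes L :: "nat \<Rightarrow> 'a set" and f :: "nat \<Rightarrow> nat"
  assumes "countable (UNIV :: 'a set)" and "infinite (UNIV :: 'a set)"
    and "\<forall>i\<ge>1. infinite (L i)"
    and "mono f" and "filterlim f at_top at_top"
  shows "\<forall>i\<ge>1. \<forall>x. enumeration (L i) x \<longrightarrow>
           (\<forall>t\<ge>1. card (x ` {1..t}) \<ge> max (gtime f i) (mstar L i + 1) \<longrightarrow>
              (\<forall>z. alg_output L f t (x ` {1..t}) z \<longrightarrow> z \<in> L i - x ` {1..t}))"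
proof (intro allI impI)
  fix i x t z
  assume i: "1 \<le> i" and en: "enumeration (L i) x" and t: "1 \<le> t"
    and cS: "max (gtime f i) (mstar L i + 1) \<le> card (x ` {1..t})"
    and out: "alg_output L f t (x ` {1..t}) z"
  define S where "S = x ` {1..t}"
  have "card S \<le> t" unfolding S_def using card_image_le[of "{1..t}" x] by simp
  then have tg: "gtime f i \<le> t" using cS S_def by simp
  have "eventually (\<lambda>n. f n \<ge> i) sequentially"
    using assms(5) by (simp add: filterlim_at_top)
  then obtain N where N: "\<forall>n\<ge>N. f n \<ge> i" by (auto simp: eventually_sequentially)
  have ex: "Suc N \<ge> 1 \<and> f (Suc N) \<ge> i" using N by simp
  have "gtime f i \<ge> 1 \<and> f (gtime f i) \<ge> i"
    unfolding gtime_def by (rule LeastI[of _ "Suc N"]) (rule ex)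
  then have fi: "f t \<ge> i" using tg assms(4) by (meson le_trans monoD)
  define ord where "ord = order L (f t)"
  define ms where "ms = snd (proc L (f t))"
  have pi: "distinct ord" "set ord = {1..f t}" "\<forall>c\<in>set ord. InvAt L ord ms c"
    "ms i = mstar L i"
  proof -
    have P: "distinct ord \<and> set ord = {1..f t} \<and> (\<forall>c\<in>set ord. InvAt L ord ms c) \<and>
      (\<forall>c. 1 \<le> c \<and> c \<le> f t \<longrightarrow> ms c = mstar L c)"
      unfolding ord_def ms_def order_def by (rule proc_inv)
    then show "distinct ord" "set ord = {1..f t}" "\<forall>c\<in>set ord. InvAt L ord ms c" by blast+
    show "ms i = mstar L i" using P i fi by blast
  qed
  have "i \<in> set ord" using pi i fi by auto
  then obtain us vs where sp: "ord = us @ i # vs" by (meson split_list)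
  have iu: "i \<notin> set us" using pi(1) sp by auto
  have SL: "S \<subseteq> L i" using en unfolding enumeration_def S_def by auto
  define I1 where "I1 = build_I L S us []"
  have I1s: "\<forall>k\<in>set I1. S \<subseteq> L k" unfolding I1_def by (rule build_I_sub) simp
  have I1u: "set I1 \<subseteq> set us" unfolding I1_def using build_I_set[of L S us "[]"] by simp
  have cond: "infinite (\<Inter>k'\<in>set (I1 @ [i]). L k')"
  proof
    assume fin: "finite (\<Inter>k'\<in>set (I1 @ [i]). L k')"
    let ?K = "set (I1 @ [i])"
    have "?K \<subseteq> insert i (preS ord i)" using I1u iu sp preS_mid[of i us vs] by auto
    moreover have "InvAt L ord ms i" using pi(3) \<open>i \<in> set ord\<close> by blast
    moreover have "i \<in> ?K" by simp
    ultimately have "card (\<Inter>k\<in>?K. L k) \<le> ms i"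
      using fin unfolding InvAt_def by blast
    then have le: "card (\<Inter>k\<in>?K. L k) \<le> mstar L i" using pi(4) by simp
    have "S \<subseteq> (\<Inter>k\<in>?K. L k)" using I1s SL by auto
    then have "card S \<le> card (\<Inter>k\<in>?K. L k)" using fin by (rule card_mono[rotated])
    then show False using le cS S_def by simp
  qed
  define I where "I = build_I L S ord []"
  have c2: "S \<subseteq> L i \<and> infinite (\<Inter>k'\<in>set (I1 @ [i]). L k')" using cond SL by (rule conjI[rotated])
  have "I = build_I L S (i # vs) I1"
    unfolding I_def sp build_I_append I1_def by (rule refl)
  also have "\<dots> = build_I L S vs (if S \<subseteq> L i \<and> infinite (\<Inter>k'\<in>set (I1 @ [i]). L k') then I1 @ [i] else I1)"
    by (simp only: build_I.simps)
  also have "\<dots> = build_I L S vs (I1 @ [i])" using c2 by (simp only: if_True simp_thms)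
  finally have "i \<in> set I" using build_I_mono[of "I1 @ [i]" L S vs] by auto
  then have "I \<noteq> []" by auto
  have "alg_output L f t S z = (if I = [] then z \<notin> S else z \<in> (\<Inter>k\<in>set I. L k) - S)"
    unfolding alg_output_def I_def ord_def Let_def by (rule refl)
  then have "z \<in> (\<Inter>k\<in>set I. L k) - S" using out \<open>I \<noteq> []\<close> unfolding S_def by simp
  then show "z \<in> L i - x ` {1..t}" using \<open>i \<in> set I\<close> S_def by auto
qed

end
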